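(* Let $\Omega\subseteq\mathbb{R}^N$ be open and bounded, $\sigma(x):=\mathrm{dist}(x,\partial\Omega)$, and let $\eta\in C^\infty(\Omega)$ be such that there exists $\kappa>0$ with $\kappa\sigma(x)^2\le\eta(x)\le\sigma(x)^2$ for every $x\in\Omega$. Let $\rho$, $M_\rho$, $C_n$, $T_n$ be as in the context. Then $$\sup_{n\in\mathbb{N}}\ \sup_{y\in\Omega}\int_\Omega C_n(x)\rho\Big(\frac{x-y}{\frac1n\eta(x)}\Big)\,dx<\infty,$$ and hence $T=T_1$ and $T_n$, $n\in\mathbb{N}$, are bounded linear operators from $L^1(\Omega)$ to $L^1(\Omega)$.
   Context: $\rho\in C_c^\infty(\mathbb{R}^N)$ satisfies $0\le\rho\le1$, $\rho(x)=0$ iff $|x|\ge1$, $\rho$ is radially symmetric, and $\rho(x)\ge\rho(1/2)$ for all $|x|<1/2$. Set $M_\rho:=(\int_{B_1(0)}\rho(y)\,dy)^{-1}$. For $x\in\Omega$ and $n\in\mathbb{N}$ let $C_n(x):=M_\rho n^N/\eta(x)^N$, and for $f\in L^1_{loc}(\Omega)$ let $T_nf(x):=C_n(x)\int_\Omega\rho\big(\frac{x-y}{\frac1n\eta(x)}\big)f(y)\,dy$; $T:=T_1$. *)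

theory Defs
  imports "HOL-Analysis.Analysis"
begin

fun Ck_on :: "nat \<Rightarrow> 'a::euclidean_space set \<Rightarrow> ('a \<Rightarrow> real) \<Rightarrow> bool" where
  "Ck_on 0 S f = continuous_on S f"
| "Ck_on (Suc k) S f = (f differentiable_on S \<and>
      (\<forall>i\<in>Basis. Ck_on k S (\<lambda>x. frechet_derivative f (at x) i)))"

definition smooth_on :: "'a::euclidean_space set \<Rightarrow> ('a \<Rightarrow> real) \<Rightarrow> bool" where
  "smooth_on S f \<longleftrightarrow> (\<forall>k. Ck_on k S f)"

definition Mrho :: "('a::euclidean_space \<Rightarrow> real) \<Rightarrow> real" where
  "Mrho \<rho> = inverse (LINT y:ball 0 1|lebesgue. \<rho> y)"

definition Cn :: "('a::euclidean_space \<Rightarrow> real) \<Rightarrow> ('a \<Rightarrow> real) \<Rightarrow> nat \<Rightarrow> 'a \<Rightarrow> real" where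
  "Cn \<rho> \<eta> n x = Mrho \<rho> * real n ^ DIM('a) / \<eta> x ^ DIM('a)"

definition Tn :: "('a::euclidean_space \<Rightarrow> real) \<Rightarrow> ('a \<Rightarrow> real) \<Rightarrow> 'a set \<Rightarrow> nat
      \<Rightarrow> ('a \<Rightarrow> real) \<Rightarrow> 'a \<Rightarrow> real" where
  "Tn \<rho> \<eta> \<Omega> n f x = Cn \<rho> \<eta> n x *
      (LINT y:\<Omega>|lebesgue. \<rho> ((real n / \<eta> x) *\<^sub>R (x - y)) * f y)"

end

theory Submission imports Defs begin
lemma key_pt:
  fixes sx sy d ex n \<kappa> M r :: real and N :: nat
  assumes k: "0<\<kappa>" and n: "1 \<le> n" and sy: "sy>0" and sx: "sx>0" and d0: "0 \<le> d"
    and t1: "sy \<le> sx + d" and t2: "sx \<le> sy + d" and e1: "\<kappa>* sx^2 \<le> ex" and e2: "ex \<le> sx^2"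
    and r0: "0 \<le> r" and r1: "r \<le> 1" and rd: "r \<noteq> 0 \<Longrightarrow> d < ex/n"
  shows "\<bar>M\<bar> * n^N / ex^N * r \<le> \<bar>M\<bar>*(9/(4*\<kappa>))^N * (n/sy^2)^N * (if d < 4* sy^2/n then 1 else 0) + \<bar>M\<bar>*(4/\<kappa>)^N"
proof (cases "r = 0")
  case True
  then show ?thesis using k n sy by simp
next
  case False
  have ex0: "ex > 0" using e1 k sx by (smt (verit) mult_pos_pos zero_less_power)
  have dl: "d < sx^2/n" using rd[OF False] e2 n by (smt (verit) divide_right_mono)
  have L: "\<bar>M\<bar> * n^N / ex^N * r \<le> \<bar>M\<bar> * (n/ex)^N"
  proof -
    have "\<bar>M\<bar> * n^N / ex^N * r \<le> \<bar>M\<bar> * n^N / ex^N * 1"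
      using r1 ex0 n by (intro mult_left_mono) auto
    then show ?thesis by (simp add: power_divide)
  qed
  show ?thesis
  proof (cases "sx \<le> n/2")
    case True
    have "sx^2/n \<le> sx/2" using True n sx by (simp add: power2_eq_square field_simps)
    hence d2: "d < sx/2" using dl by linarith
    hence sx2: "sx < 2* sy" using t2 by linarith
    have sx3: "2* sy/3 \<le> sx" using t1 d2 by linarith
    have "sx^2 < (2* sy)^2" using sx2 sx by (intro power_strict_mono) auto
    hence "sx^2/n < 4* sy^2/n" using n by (simp add: divide_strict_right_mono)
    hence ind: "d < 4* sy^2/n" using dl by linarith
    have "(2* sy/3)^2 \<le> sx^2" using sx3 sy by (intro power_mono) auto
    moreover have "(2* sy/3)^2 = 4* sy^2/9" by (simp add: power2_eq_square)
    ultimately have "\<kappa>*(4* sy^2/9) \<le> \<kappa> * sx^2" using k by (intro mult_left_mono) auto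
    hence "\<kappa>*(4* sy^2/9) \<le> ex" using e1 by linarith
    hence "n/ex \<le> n/(\<kappa>*(4* sy^2/9))" using k sy n ex0 by (intro divide_left_mono) auto
    also have "\<dots> = (9/(4*\<kappa>)) * (n/sy^2)" using k sy by (simp add: field_simps)
    finally have "(n/ex)^N \<le> ((9/(4*\<kappa>)) * (n/sy^2))^N" using n ex0 by (intro power_mono) auto
    hence "\<bar>M\<bar> * (n/ex)^N \<le> \<bar>M\<bar>* ((9/(4*\<kappa>)) * (n/sy^2))^N"
      by (intro mult_left_mono) auto
    hence "\<bar>M\<bar> * (n/ex)^N \<le> \<bar>M\<bar>*(9/(4*\<kappa>))^N * (n/sy^2)^N"
      by (simp only: power_mult_distrib mult.assoc)
    moreover have "0 \<le> \<bar>M\<bar>*(4/\<kappa>)^N" using k by simp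
    ultimately show ?thesis using L ind by simp
  next
    case False
    have "(n/2)^2 \<le> sx^2" using False n by (intro power_mono) auto
    moreover have "(n/2)^2 = n^2/4" by (simp add: power2_eq_square)
    ultimately have "\<kappa>*(n^2/4) \<le> \<kappa> * sx^2" using k by (intro mult_left_mono) auto
    hence "\<kappa>*(n^2/4) \<le> ex" using e1 by linarith
    hence "n/ex \<le> n/(\<kappa>*(n^2/4))" using k n ex0 by (intro divide_left_mono) auto
    also have "\<dots> = (4/\<kappa>)/n" using k n by (simp add: field_simps power2_eq_square)
    also have "\<dots> \<le> 4/\<kappa>" using k n by (simp add: divide_le_eq)
    finally have "(n/ex)^N \<le> (4/\<kappa>)^N" using n ex0 by (intro power_mono) auto
    hence "\<bar>M\<bar> * (n/ex)^N \<le> \<bar>M\<bar>*(4/\<kappa>)^N" by (simp add: mult_left_mono)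
    moreover have "0 \<le> \<bar>M\<bar>*(9/(4*\<kappa>))^N * (n/sy^2)^N * (if d < 4* sy^2/n then 1 else 0)" using k n sy by simp
    ultimately show ?thesis using L by linarith
  qed
qed

lemma sigma_pos:
  fixes \<Omega> :: "'a::euclidean_space set"
  assumes "open \<Omega>" "bounded \<Omega>" "x \<in> \<Omega>"
  shows "infdist x (frontier \<Omega>) > 0"
proof -
  have "\<Omega> \<noteq> UNIV" using assms(2) by auto
  hence "frontier \<Omega> \<noteq> {}" using assms(3) frontier_not_empty by blast
  moreover have "x \<notin> frontier \<Omega>" using assms(1,3) by (simp add: frontier_def interior_open)
  ultimately show ?thesis by (intro infdist_pos_not_in_closed) auto
qed

lemma bound1:
  fixes \<Omega> :: "'a::euclidean_space set" and \<eta> \<rho> :: "'a \<Rightarrow> real" and \<kappa> :: real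
  assumes op: "open \<Omega>" and bd: "bounded \<Omega>" and k: "\<kappa> > 0"
    and eta: "\<forall>x\<in>\<Omega>. \<kappa> * (infdist x (frontier \<Omega>))\<^sup>2 \<le> \<eta> x \<and> \<eta> x \<le> (infdist x (frontier \<Omega>))\<^sup>2"
    and r01: "\<forall>x. 0 \<le> \<rho> x \<and> \<rho> x \<le> 1"
    and rsupp: "\<forall>x. \<rho> x = 0 \<longleftrightarrow> norm x \<ge> 1"
  shows "\<exists>B\<ge>0. \<forall>n::nat. n \<ge> 1 \<longrightarrow> (\<forall>y\<in>\<Omega>.
     (\<integral>\<^sup>+x\<in>\<Omega>. ennreal (\<bar>Cn \<rho> \<eta> n x\<bar> * \<rho> ((real n / \<eta> x) *\<^sub>R (x - y))) \<partial>lebesgue) \<le> ennreal B)"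
proof -
  define N where "N = DIM('a)"
  define M where "M = Mrho \<rho>"
  define c1 where "c1 = \<bar>M\<bar>*(9/(4*\<kappa>))^N"
  define c2 where "c2 = \<bar>M\<bar>*(4/\<kappa>)^N"
  define U where "U = measure lebesgue (ball (0::'a) 1)"
  define V where "V = measure lebesgue \<Omega>"
  have c1: "c1 \<ge> 0" and c2: "c2 \<ge> 0" using k by (auto simp: c1_def c2_def)
  have U: "U \<ge> 0" and V: "V \<ge> 0" by (auto simp: U_def V_def)
  have Om: "\<Omega> \<in> lmeasurable" using op bd by (simp add: lmeasurable_open)
  have Osets: "\<Omega> \<in> sets lebesgue" using Om by (simp add: fmeasurable_def)
  have B0: "c1*4^N*U + c2*V \<ge> 0" using c1 c2 U V by simp
  show ?thesis
  proof (intro exI[of _ "c1*4^N*U + c2*V"] conjI B0 allI impI ballI)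
    fix n :: nat and y assume n: "n \<ge> 1" and y: "y \<in> \<Omega>"
    define s where "s = infdist y (frontier \<Omega>)"
    have s: "s > 0" using sigma_pos[OF op bd y] by (simp add: s_def)
    define R where "R = 4* s^2/n"
    have R: "R \<ge> 0" using n by (simp add: R_def)
    have pt: "ennreal (\<bar>Cn \<rho> \<eta> n x\<bar> * \<rho> ((real n / \<eta> x) *\<^sub>R (x - y))) * indicator \<Omega> x
       \<le> ennreal (c1 * (n/s^2)^N) * indicator (ball y R) x + ennreal c2 * indicator \<Omega> x" for x
    proof (cases "x \<in> \<Omega>")
      case False thus ?thesis by simp
    next
      case True
      define sx where "sx = infdist x (frontier \<Omega>)"
      have sx: "sx > 0" using sigma_pos[OF op bd True] by (simp add: sx_def)
      have e1: "\<kappa> * sx^2 \<le> \<eta> x" and e2: "\<eta> x \<le> sx^2" using eta True by (auto simp: sx_def)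
      have ex0: "\<eta> x > 0" using e1 k sx by (smt (verit) mult_pos_pos zero_less_power)
      have Cn: "\<bar>Cn \<rho> \<eta> n x\<bar> = \<bar>M\<bar> * real n ^ N / \<eta> x ^ N"
        using ex0 by (simp add: Cn_def M_def N_def abs_mult)
      have rd: "dist x y < \<eta> x / n" if "\<rho> ((real n / \<eta> x) *\<^sub>R (x - y)) \<noteq> 0"
      proof -
        have "norm ((real n / \<eta> x) *\<^sub>R (x - y)) < 1" using that rsupp by force
        hence "real n / \<eta> x * dist x y < 1" using ex0 by (simp add: dist_norm)
        thus ?thesis using ex0 n by (simp add: field_simps)
      qed
      have kp: "\<bar>M\<bar> * real n ^ N / \<eta> x ^ N * \<rho> ((real n / \<eta> x) *\<^sub>R (x - y))
          \<le> \<bar>M\<bar>*(9/(4*\<kappa>))^N * (real n/s^2)^N * (if dist x y < 4* s^2/real n then 1 else 0) + \<bar>M\<bar>*(4/\<kappa>)^N"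
        apply (rule key_pt[OF k _ s sx zero_le_dist _ _ e1 e2])
        using n r01 rd infdist_triangle[of y "frontier \<Omega>" x] infdist_triangle[of x "frontier \<Omega>" y]
        by (auto simp: s_def sx_def dist_commute)
      have "ennreal (\<bar>Cn \<rho> \<eta> n x\<bar> * \<rho> ((real n / \<eta> x) *\<^sub>R (x - y)))
          \<le> ennreal (c1 * (n/s^2)^N * indicator (ball y R) x + c2)"
        using kp by (intro ennreal_leI) (auto simp: Cn c1_def c2_def R_def dist_commute indicator_def)
      also have "\<dots> = ennreal (c1 * (n/s^2)^N) * indicator (ball y R) x + ennreal c2"
        using c1 c2 s by (simp add: indicator_def ennreal_plus)
      finally show ?thesis using True by simp
    qed
    have "(\<integral>\<^sup>+x\<in>\<Omega>. ennreal (\<bar>Cn \<rho> \<eta> n x\<bar> * \<rho> ((real n / \<eta> x) *\<^sub>R (x - y))) \<partial>lebesgue)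
       \<le> (\<integral>\<^sup>+x. ennreal (c1 * (n/s^2)^N) * indicator (ball y R) x + ennreal c2 * indicator \<Omega> x \<partial>lebesgue)"
      by (intro nn_integral_mono pt)
    also have "\<dots> = ennreal (c1 * (n/s^2)^N) * emeasure lebesgue (ball y R) + ennreal c2 * emeasure lebesgue \<Omega>"
    proof -
      have bs: "ball y R \<in> sets lebesgue" by simp
      have "(\<integral>\<^sup>+x. ennreal (c1 * (n/s^2)^N) * indicator (ball y R) x + ennreal c2 * indicator \<Omega> x \<partial>lebesgue)
        = (\<integral>\<^sup>+x. ennreal (c1 * (n/s^2)^N) * indicator (ball y R) x \<partial>lebesgue) + (\<integral>\<^sup>+x. ennreal c2 * indicator \<Omega> x \<partial>lebesgue)"
      proof -
        have m1: "(\<lambda>x. ennreal (c1 * (n/s^2)^N) * indicator (ball y R) x) \<in> borel_measurable lebesgue"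
          by (rule borel_measurable_times_ennreal[OF borel_measurable_const borel_measurable_indicator[OF bs]])
        have m2: "(\<lambda>x. ennreal c2 * indicator \<Omega> x) \<in> borel_measurable lebesgue"
          by (rule borel_measurable_times_ennreal[OF borel_measurable_const borel_measurable_indicator[OF Osets]])
        show ?thesis by (rule nn_integral_add[OF m1 m2])
      qed
      also have "\<dots> = ennreal (c1 * (n/s^2)^N) * emeasure lebesgue (ball y R) + ennreal c2 * emeasure lebesgue \<Omega>"
        by (simp only: nn_integral_cmult_indicator[OF bs] nn_integral_cmult_indicator[OF Osets])
      finally show ?thesis .
    qed
    also have "\<dots> = ennreal (c1 * (n/s^2)^N * (R^N * U) + c2 * V)"
    proof -
      have mb: "measure lebesgue (ball y R) = R^N * U"
        using content_ball_conv_unit_ball[OF R, of y] by (simp add: U_def N_def)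
      have e1: "emeasure lebesgue (ball y R) = ennreal (R^N * U)"
        using mb by (simp add: emeasure_eq_measure2)
      have e2: "emeasure lebesgue \<Omega> = ennreal V"
        using Om by (simp add: emeasure_eq_measure2 V_def)
      have p1: "c1 * (n/s^2)^N \<ge> 0" using c1 by simp
      have p2: "R^N * U \<ge> 0" using R U by simp
      show ?thesis unfolding e1 e2
        using p1 p2 c2 V by (simp add: ennreal_mult[symmetric] ennreal_plus[symmetric] mult_nonneg_nonneg del: ennreal_plus)
    qed
    also have "c1 * (n/s^2)^N * (R^N * U) + c2 * V = c1*4^N*U + c2*V"
    proof -
      have "(n/s^2) * R = 4" using s n by (simp add: R_def)
      hence "(n/s^2)^N * R^N = 4^N" by (metis power_mult_distrib)
      thus ?thesis by (metis mult.commute mult.left_commute)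
    qed
    finally show "(\<integral>\<^sup>+x\<in>\<Omega>. ennreal (\<bar>Cn \<rho> \<eta> n x\<bar> * \<rho> ((real n / \<eta> x) *\<^sub>R (x - y))) \<partial>lebesgue) \<le> ennreal (c1*4^N*U + c2*V)" .
  qed
qed

lemma sf: "sigma_finite_measure (lebesgue :: 'a::euclidean_space measure)"
proof
  obtain A :: "'a set set" where A: "countable A" "A \<subseteq> sets lborel" "\<Union>A = space lborel" "\<forall>a\<in>A. emeasure lborel a \<noteq> \<infinity>"
    using lborel.sigma_finite_countable by blast
  show "\<exists>A. countable A \<and> A \<subseteq> sets (lebesgue::'a measure) \<and> \<Union> A = space lebesgue \<and> (\<forall>a\<in>A. emeasure lebesgue a \<noteq> \<infinity>)"
    apply (rule exI[of _ A]) using A by auto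
qed

lemma fst_bm: "fst \<in> borel_measurable ((lebesgue::'a::euclidean_space measure) \<Otimes>\<^sub>M (lebesgue::'b::euclidean_space measure))"
  using measurable_compose[OF measurable_fst id_borel_measurable_lebesgue] by (simp add: o_def id_def)
lemma snd_bm: "snd \<in> borel_measurable ((lebesgue::'a::euclidean_space measure) \<Otimes>\<^sub>M (lebesgue::'b::euclidean_space measure))"
  using measurable_compose[OF measurable_snd id_borel_measurable_lebesgue] by (simp add: o_def id_def)

lemma prod_meas:
  fixes \<rho> :: "'a::euclidean_space \<Rightarrow> real" and e :: "'a \<Rightarrow> real" and g :: "'a \<Rightarrow> real" and n :: real
  assumes [measurable]: "\<rho> \<in> borel_measurable borel" "e \<in> borel_measurable lebesgue" "g \<in> borel_measurable lebesgue"
  shows "(\<lambda>(x,y). \<rho> ((n / e x) *\<^sub>R (x - y)) * g y) \<in> borel_measurable (lebesgue \<Otimes>\<^sub>M lebesgue)"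
proof -
  note [measurable] = fst_bm snd_bm measurable_compose[OF measurable_snd assms(3)] measurable_compose[OF measurable_fst assms(2)]
  show ?thesis by measurable
qed

lemma borel_to_leb: "f \<in> borel_measurable borel \<Longrightarrow> (f::'a::euclidean_space \<Rightarrow> 'b::topological_space) \<in> borel_measurable lebesgue"
  by (metis measurable_lborel2 measurable_completion)

lemma int_rho:
  fixes \<rho> :: "'a::euclidean_space \<Rightarrow> real"
  assumes rc: "continuous_on UNIV \<rho>" and r01: "\<forall>x. 0 \<le> \<rho> x \<and> \<rho> x \<le> 1"
    and fi: "set_integrable lebesgue \<Omega> f"
  shows "set_integrable lebesgue \<Omega> (\<lambda>y. \<rho> (c *\<^sub>R (x - y)) * f y)"
proof -
  have fi': "integrable lebesgue (\<lambda>y. indicator \<Omega> y *\<^sub>R f y)" using fi by (simp add: set_integrable_def)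
  have "continuous_on UNIV (\<lambda>y. \<rho> (c *\<^sub>R (x - y)))"
    by (intro continuous_on_compose2[OF rc]) (auto intro!: continuous_intros)
  hence hm: "(\<lambda>y. \<rho> (c *\<^sub>R (x - y))) \<in> borel_measurable lebesgue"
    by (intro borel_to_leb borel_measurable_continuous_onI)
  have "integrable lebesgue (\<lambda>y. \<rho> (c *\<^sub>R (x - y)) * (indicator \<Omega> y *\<^sub>R f y))"
  proof (rule Bochner_Integration.integrable_bound[OF fi'])
    show "(\<lambda>y. \<rho> (c *\<^sub>R (x - y)) * (indicator \<Omega> y *\<^sub>R f y)) \<in> borel_measurable lebesgue"
      using hm borel_measurable_integrable[OF fi'] by (rule borel_measurable_times)
    show "AE y in lebesgue. norm (\<rho> (c *\<^sub>R (x - y)) * (indicator \<Omega> y *\<^sub>R f y)) \<le> norm (indicator \<Omega> y *\<^sub>R f y)"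
    proof (rule AE_I2)
      fix y
      have "\<bar>\<rho> (c *\<^sub>R (x - y))\<bar> \<le> 1" using r01 by (simp add: abs_le_iff)
      thus "norm (\<rho> (c *\<^sub>R (x - y)) * (indicator \<Omega> y *\<^sub>R f y)) \<le> norm (indicator \<Omega> y *\<^sub>R f y)"
        by (simp add: abs_mult mult_left_le_one_le)
    qed
  qed
  thus ?thesis unfolding set_integrable_def by (simp add: mult.left_commute)
qed

theorem theorem5p3:
  fixes \<Omega> :: "'a::euclidean_space set" and \<eta> \<rho> :: "'a \<Rightarrow> real" and \<kappa> :: real
  assumes "open \<Omega>" and "bounded \<Omega>"
    and "smooth_on \<Omega> \<eta>"
    and "\<kappa> > 0"
    and "\<forall>x\<in>\<Omega>. \<kappa> * (infdist x (frontier \<Omega>))\<^sup>2 \<le> \<eta> x \<and> \<eta> x \<le> (infdist x (frontier \<Omega>))\<^sup>2"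
    and "smooth_on UNIV \<rho>" and "compact (closure {x. \<rho> x \<noteq> 0})"
    and "\<forall>x. 0 \<le> \<rho> x \<and> \<rho> x \<le> 1"
    and "\<forall>x. \<rho> x = 0 \<longleftrightarrow> norm x \<ge> 1"
    and "\<forall>x y. norm x = norm y \<longrightarrow> \<rho> x = \<rho> y"
    and "\<forall>x z. norm x < 1/2 \<longrightarrow> norm z = 1/2 \<longrightarrow> \<rho> z \<le> \<rho> x"
  shows "(\<exists>B::real. \<forall>n::nat. n \<ge> 1 \<longrightarrow> (\<forall>y\<in>\<Omega>.
            (\<integral>\<^sup>+x\<in>\<Omega>. ennreal (Cn \<rho> \<eta> n x * \<rho> ((real n / \<eta> x) *\<^sub>R (x - y))) \<partial>lebesgue)
              \<le> ennreal B))
    \<and> (\<forall>n::nat. n \<ge> 1 \<longrightarrow> (\<forall>f g (a::real) b. set_integrable lebesgue \<Omega> f \<longrightarrow>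
            set_integrable lebesgue \<Omega> g \<longrightarrow>
            (\<forall>x\<in>\<Omega>. Tn \<rho> \<eta> \<Omega> n (\<lambda>y. a * f y + b * g y) x
                      = a * Tn \<rho> \<eta> \<Omega> n f x + b * Tn \<rho> \<eta> \<Omega> n g x)))
    \<and> (\<exists>K::real. \<forall>n::nat. n \<ge> 1 \<longrightarrow> (\<forall>f. set_integrable lebesgue \<Omega> f \<longrightarrow>
            (\<forall>x\<in>\<Omega>. set_integrable lebesgue \<Omega> (\<lambda>y. \<rho> ((real n / \<eta> x) *\<^sub>R (x - y)) * f y))
            \<and> set_integrable lebesgue \<Omega> (Tn \<rho> \<eta> \<Omega> n f)
            \<and> (LINT x:\<Omega>|lebesgue. \<bar>Tn \<rho> \<eta> \<Omega> n f x\<bar>) \<le> K * (LINT y:\<Omega>|lebesgue. \<bar>f y\<bar>)))"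
proof -
  note op = assms(1) and bd = assms(2) and k = assms(4) and eta = assms(5)
    and r01 = assms(8) and rsupp = assms(9)
  have rc: "continuous_on UNIV \<rho>" using assms(6) by (metis smooth_on_def Ck_on.simps(1))
  have ec: "continuous_on \<Omega> \<eta>" using assms(3) by (metis smooth_on_def Ck_on.simps(1))
  obtain B where B0: "B \<ge> 0" and Bb: "\<And>n y. n \<ge> 1 \<Longrightarrow> y \<in> \<Omega> \<Longrightarrow>
     (\<integral>\<^sup>+x\<in>\<Omega>. ennreal (\<bar>Cn \<rho> \<eta> n x\<bar> * \<rho> ((real n / \<eta> x) *\<^sub>R (x - y))) \<partial>lebesgue) \<le> ennreal B"
    using bound1[OF op bd k eta r01 rsupp] by blast
  have C1: "\<exists>B::real. \<forall>n::nat. n \<ge> 1 \<longrightarrow> (\<forall>y\<in>\<Omega>.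
            (\<integral>\<^sup>+x\<in>\<Omega>. ennreal (Cn \<rho> \<eta> n x * \<rho> ((real n / \<eta> x) *\<^sub>R (x - y))) \<partial>lebesgue)
              \<le> ennreal B)"
  proof (intro exI[of _ B] allI impI ballI)
    fix n :: nat and y assume n: "n \<ge> 1" and y: "y \<in> \<Omega>"
    have "(\<integral>\<^sup>+x\<in>\<Omega>. ennreal (Cn \<rho> \<eta> n x * \<rho> ((real n / \<eta> x) *\<^sub>R (x - y))) \<partial>lebesgue)
       \<le> (\<integral>\<^sup>+x\<in>\<Omega>. ennreal (\<bar>Cn \<rho> \<eta> n x\<bar> * \<rho> ((real n / \<eta> x) *\<^sub>R (x - y))) \<partial>lebesgue)"
      using r01 by (intro nn_integral_mono mult_right_mono ennreal_leI) (auto intro!: mult_right_mono)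
    also have "\<dots> \<le> ennreal B" using Bb n y by blast
    finally show "(\<integral>\<^sup>+x\<in>\<Omega>. ennreal (Cn \<rho> \<eta> n x * \<rho> ((real n / \<eta> x) *\<^sub>R (x - y))) \<partial>lebesgue) \<le> ennreal B" .
  qed
  have C2: "\<forall>n::nat. n \<ge> 1 \<longrightarrow> (\<forall>f g (a::real) b. set_integrable lebesgue \<Omega> f \<longrightarrow>
            set_integrable lebesgue \<Omega> g \<longrightarrow>
            (\<forall>x\<in>\<Omega>. Tn \<rho> \<eta> \<Omega> n (\<lambda>y. a * f y + b * g y) x
                      = a * Tn \<rho> \<eta> \<Omega> n f x + b * Tn \<rho> \<eta> \<Omega> n g x))"
  proof (intro allI impI ballI)
    fix n :: nat and f g :: "'a \<Rightarrow> real" and a b :: real and x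
    assume fi: "set_integrable lebesgue \<Omega> f" and gi: "set_integrable lebesgue \<Omega> g"
    let ?h = "\<lambda>y. \<rho> ((real n / \<eta> x) *\<^sub>R (x - y))"
    have i1: "set_integrable lebesgue \<Omega> (\<lambda>y. ?h y * f y)" using int_rho[OF rc r01 fi] .
    have i2: "set_integrable lebesgue \<Omega> (\<lambda>y. ?h y * g y)" using int_rho[OF rc r01 gi] .
    have "(LINT y:\<Omega>|lebesgue. ?h y * (a * f y + b * g y))
        = (LINT y:\<Omega>|lebesgue. a * (?h y * f y) + b * (?h y * g y))"
      by (simp add: algebra_simps)
    also have "\<dots> = (LINT y:\<Omega>|lebesgue. a * (?h y * f y)) + (LINT y:\<Omega>|lebesgue. b * (?h y * g y))"
      using i1 i2 by (intro set_integral_add) (auto intro: set_integrable_mult_right)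
    also have "\<dots> = a * (LINT y:\<Omega>|lebesgue. ?h y * f y) + b * (LINT y:\<Omega>|lebesgue. ?h y * g y)"
      by (simp add: set_integral_mult_right)
    finally show "Tn \<rho> \<eta> \<Omega> n (\<lambda>y. a * f y + b * g y) x = a * Tn \<rho> \<eta> \<Omega> n f x + b * Tn \<rho> \<eta> \<Omega> n g x"
      unfolding Tn_def by (simp add: algebra_simps)
  qed
  have C3: "\<exists>K::real. \<forall>n::nat. n \<ge> 1 \<longrightarrow> (\<forall>f. set_integrable lebesgue \<Omega> f \<longrightarrow>
            (\<forall>x\<in>\<Omega>. set_integrable lebesgue \<Omega> (\<lambda>y. \<rho> ((real n / \<eta> x) *\<^sub>R (x - y)) * f y))
            \<and> set_integrable lebesgue \<Omega> (Tn \<rho> \<eta> \<Omega> n f)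
            \<and> (LINT x:\<Omega>|lebesgue. \<bar>Tn \<rho> \<eta> \<Omega> n f x\<bar>) \<le> K * (LINT y:\<Omega>|lebesgue. \<bar>f y\<bar>))"
  proof (intro exI[of _ B] allI impI)
    fix n :: nat and f :: "'a \<Rightarrow> real"
    assume n: "n \<ge> 1" and fi: "set_integrable lebesgue \<Omega> f"
    have P1: "\<forall>x\<in>\<Omega>. set_integrable lebesgue \<Omega> (\<lambda>y. \<rho> ((real n / \<eta> x) *\<^sub>R (x - y)) * f y)"
      using int_rho[OF rc r01 fi] by blast
    interpret L: sigma_finite_measure "lebesgue :: 'a measure" by (rule sf)
    interpret LL: pair_sigma_finite "lebesgue :: 'a measure" "lebesgue :: 'a measure"
      by (simp add: pair_sigma_finite_def sf)
    define e where "e = (\<lambda>x. if x \<in> \<Omega> then \<eta> x else 1)"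
    define fO where "fO = (\<lambda>y. indicator \<Omega> y *\<^sub>R f y)"
    define h where "h = (\<lambda>x y. \<rho> ((real n / e x) *\<^sub>R (x - y)))"
    define C where "C = (\<lambda>x. Cn \<rho> e n x)"
    define F where "F = (\<lambda>x y. h x y * fO y)"
    define Phi where "Phi = (\<lambda>x. indicator \<Omega> x *\<^sub>R Tn \<rho> \<eta> \<Omega> n f x)"
    have Osets: "\<Omega> \<in> sets lebesgue" using op by simp
    have fOi: "integrable lebesgue fO" using fi by (simp add: set_integrable_def fO_def)
    have fOm: "fO \<in> borel_measurable lebesgue" using fOi by (rule borel_measurable_integrable)
    have rm: "\<rho> \<in> borel_measurable borel" using rc by (rule borel_measurable_continuous_onI)
    have em: "e \<in> borel_measurable lebesgue"
      unfolding e_def using op ec by (intro borel_to_leb borel_measurable_continuous_on_if) (auto intro: continuous_on_const)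
    have Fm: "case_prod F \<in> borel_measurable (lebesgue \<Otimes>\<^sub>M lebesgue)"
      unfolding F_def h_def using prod_meas[OF rm em fOm] by simp
    have Cm: "C \<in> borel_measurable lebesgue" unfolding C_def Cn_def using em by measurable
    have h0: "0 \<le> h x y" for x y using r01 by (simp add: h_def)
    have Fi: "integrable lebesgue (F x)" for x
      using int_rho[OF rc r01 fi, of "real n / e x" x] by (simp add: set_integrable_def F_def h_def fO_def mult.left_commute)
    have Tn_eq: "Tn \<rho> \<eta> \<Omega> n f x = C x * integral\<^sup>L lebesgue (F x)" if "x \<in> \<Omega>" for x
      using that unfolding Tn_def C_def Cn_def F_def h_def fO_def e_def set_lebesgue_integral_def
      by (simp add: mult.left_commute)
    have Phi_eq: "Phi = (\<lambda>x. indicator \<Omega> x * (C x * integral\<^sup>L lebesgue (F x)))"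
      by (rule ext) (simp add: Phi_def Tn_eq indicator_def)
    have Phim: "Phi \<in> borel_measurable lebesgue"
      unfolding Phi_eq using Osets Cm L.borel_measurable_lebesgue_integral[OF Fm] by measurable
    show "(\<forall>x\<in>\<Omega>. set_integrable lebesgue \<Omega> (\<lambda>y. \<rho> ((real n / \<eta> x) *\<^sub>R (x - y)) * f y))
            \<and> set_integrable lebesgue \<Omega> (Tn \<rho> \<eta> \<Omega> n f)
            \<and> (LINT x:\<Omega>|lebesgue. \<bar>Tn \<rho> \<eta> \<Omega> n f x\<bar>) \<le> B * (LINT y:\<Omega>|lebesgue. \<bar>f y\<bar>)"
    proof -
      define G where "G = (\<lambda>x y. ennreal (indicator \<Omega> x * \<bar>C x\<bar> * h x y) * ennreal \<bar>fO y\<bar>)"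
      have hm2: "(\<lambda>(x,y). h x y) \<in> borel_measurable (lebesgue \<Otimes>\<^sub>M lebesgue)"
        using prod_meas[OF rm em, of "\<lambda>_. 1" "real n"] by (simp add: h_def)
      note [measurable] = measurable_compose[OF measurable_fst Cm] measurable_compose[OF measurable_snd fOm]
          measurable_compose[OF measurable_fst borel_measurable_indicator[OF Osets]]
          hm2[unfolded case_prod_beta]
      have Gm: "case_prod G \<in> borel_measurable (lebesgue \<Otimes>\<^sub>M lebesgue)"
        unfolding G_def case_prod_beta by measurable
      have Km: "(\<lambda>p. ennreal (indicator \<Omega> (fst p) * \<bar>C (fst p)\<bar> * h (fst p) (snd p))) \<in> borel_measurable (lebesgue \<Otimes>\<^sub>M lebesgue)"
        by measurable
      define I where "I = (LINT y:\<Omega>|lebesgue. \<bar>f y\<bar>)"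
      have fOabs: "(\<integral>\<^sup>+y. ennreal \<bar>fO y\<bar> \<partial>lebesgue) = ennreal I"
      proof -
        have "(\<integral>\<^sup>+y. ennreal \<bar>fO y\<bar> \<partial>lebesgue) = ennreal (integral\<^sup>L lebesgue (\<lambda>y. \<bar>fO y\<bar>))"
          using integrable_abs[OF fOi] by (intro nn_integral_eq_integral) auto
        also have "integral\<^sup>L lebesgue (\<lambda>y. \<bar>fO y\<bar>) = I"
          unfolding I_def set_lebesgue_integral_def fO_def by (simp add: abs_mult)
        finally show ?thesis .
      qed
      have I0: "I \<ge> 0" unfolding I_def set_lebesgue_integral_def by (intro Bochner_Integration.integral_nonneg) simp
      have nb: "ennreal (norm (Phi x)) \<le> (\<integral>\<^sup>+y. G x y \<partial>lebesgue)" for x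
      proof (cases "x \<in> \<Omega>")
        case False thus ?thesis by (simp add: Phi_def)
      next
        case True
        have "(\<integral>\<^sup>+y. G x y \<partial>lebesgue) = (\<integral>\<^sup>+y. ennreal \<bar>C x\<bar> * ennreal (norm (F x y)) \<partial>lebesgue)"
          using True h0 by (intro nn_integral_cong) (simp add: G_def F_def abs_mult ennreal_mult[symmetric] mult.assoc)
        also have "\<dots> = ennreal \<bar>C x\<bar> * (\<integral>\<^sup>+y. ennreal (norm (F x y)) \<partial>lebesgue)"
          using Fi[of x] by (intro nn_integral_cmult) auto
        finally have eq: "(\<integral>\<^sup>+y. G x y \<partial>lebesgue) = ennreal \<bar>C x\<bar> * (\<integral>\<^sup>+y. ennreal (norm (F x y)) \<partial>lebesgue)" .
        have "ennreal (norm (Phi x)) = ennreal \<bar>C x\<bar> * ennreal (norm (integral\<^sup>L lebesgue (F x)))"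
          using True by (simp add: Phi_def Tn_eq abs_mult ennreal_mult[symmetric])
        also have "\<dots> \<le> ennreal \<bar>C x\<bar> * (\<integral>\<^sup>+y. ennreal (norm (F x y)) \<partial>lebesgue)"
          by (intro mult_left_mono integral_norm_bound_ennreal Fi) auto
        finally show ?thesis using eq by simp
      qed
      have inner: "(\<integral>\<^sup>+x. G x y \<partial>lebesgue) \<le> ennreal B * ennreal \<bar>fO y\<bar>" for y
      proof (cases "y \<in> \<Omega>")
        case False thus ?thesis by (simp add: G_def fO_def)
      next
        case True
        have "(\<integral>\<^sup>+x. G x y \<partial>lebesgue) = (\<integral>\<^sup>+x. ennreal (indicator \<Omega> x * \<bar>C x\<bar> * h x y) \<partial>lebesgue) * ennreal \<bar>fO y\<bar>"
          unfolding G_def using measurable_Pair1[OF Km] by (intro nn_integral_multc) auto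
        also have "(\<integral>\<^sup>+x. ennreal (indicator \<Omega> x * \<bar>C x\<bar> * h x y) \<partial>lebesgue)
           = (\<integral>\<^sup>+x\<in>\<Omega>. ennreal (\<bar>Cn \<rho> \<eta> n x\<bar> * \<rho> ((real n / \<eta> x) *\<^sub>R (x - y))) \<partial>lebesgue)"
          by (intro nn_integral_cong) (simp add: indicator_def C_def h_def e_def Cn_def)
        also have "\<dots> \<le> ennreal B" using Bb[OF n True] .
        finally show ?thesis by (simp add: mult_right_mono mult.commute)
      qed
      have tot: "(\<integral>\<^sup>+x. ennreal (norm (Phi x)) \<partial>lebesgue) \<le> ennreal (B * I)"
      proof -
        have "(\<integral>\<^sup>+x. ennreal (norm (Phi x)) \<partial>lebesgue) \<le> (\<integral>\<^sup>+x. \<integral>\<^sup>+y. G x y \<partial>lebesgue \<partial>lebesgue)"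
          by (intro nn_integral_mono nb)
        also have "\<dots> = (\<integral>\<^sup>+y. \<integral>\<^sup>+x. G x y \<partial>lebesgue \<partial>lebesgue)"
          using LL.Fubini'[OF Gm] by simp
        also have "\<dots> \<le> (\<integral>\<^sup>+y. ennreal B * ennreal \<bar>fO y\<bar> \<partial>lebesgue)"
          by (intro nn_integral_mono inner)
        also have "\<dots> = ennreal B * ennreal I"
          using fOm by (subst nn_integral_cmult) (auto simp: fOabs)
        also have "\<dots> = ennreal (B * I)" using B0 I0 by (simp add: ennreal_mult)
        finally show ?thesis .
      qed
      have Phii: "integrable lebesgue Phi"
        using tot by (intro integrableI_bounded Phim) (simp add: le_less_trans)
      have si: "set_integrable lebesgue \<Omega> (Tn \<rho> \<eta> \<Omega> n f)"
        using Phii by (simp add: set_integrable_def Phi_def)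
      have "ennreal (LINT x:\<Omega>|lebesgue. \<bar>Tn \<rho> \<eta> \<Omega> n f x\<bar>) = ennreal (integral\<^sup>L lebesgue (\<lambda>x. norm (Phi x)))"
        unfolding set_lebesgue_integral_def Phi_def by (simp add: abs_mult)
      also have "\<dots> = (\<integral>\<^sup>+x. ennreal (norm (Phi x)) \<partial>lebesgue)"
        using integrable_norm[OF Phii] by (intro nn_integral_eq_integral[symmetric]) auto
      also have "\<dots> \<le> ennreal (B * I)" by (rule tot)
      finally have "(LINT x:\<Omega>|lebesgue. \<bar>Tn \<rho> \<eta> \<Omega> n f x\<bar>) \<le> B * I"
        using B0 I0 by (simp add: ennreal_le_iff)
      thus ?thesis using P1 si by (simp add: I_def)
    qed
  qed
  show ?thesis using C1 C2 C3 by blast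
qed
end
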